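(* Assume $\mathsf{MA}(\sigma\text{-centered})$. Let $\kappa<\mathfrak{c}$ be a cardinal. Suppose that $A_\alpha$ and $B_\alpha$ are countable dense subsets of $2^\omega$ for each $\alpha<\kappa$, and that $A_\alpha\cap A_\beta=\varnothing$ and $B_\alpha\cap B_\beta=\varnothing$ whenever $\alpha<\beta<\kappa$. Then there exists a homeomorphism $f:2^\omega\to 2^\omega$ such that $f[A_\alpha]=B_\alpha$ for every $\alpha<\kappa$.
   Context: $2^\omega$ is the Cantor set. $\mathsf{MA}(\sigma\text{-centered})$ is Martin's Axiom restricted to $\sigma$-centered posets: for every $\sigma$-centered poset and every family of fewer than $\mathfrak{c}$ dense subsets of it there is a filter meeting all of them. *)

theory Defs
  imports "HOL-Analysis.Analysis" "HOL-Library.Equipollence"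
begin

definition cantor_space :: "(nat \<Rightarrow> bool) topology" where
  "cantor_space = product_topology (\<lambda>_. discrete_topology (UNIV :: bool set)) (UNIV :: nat set)"

text \<open>A set of size continuum (2^omega itself), used to express cardinalities below c.\<close>
abbreviation continuum_set :: "(nat \<Rightarrow> bool) set" where
  "continuum_set \<equiv> UNIV"

text \<open>Forcing notions: a poset (P, le), le p q meaning p is stronger than q.\<close>
definition centered :: "'a set \<Rightarrow> ('a \<Rightarrow> 'a \<Rightarrow> bool) \<Rightarrow> 'a set \<Rightarrow> bool" where
  "centered P le C \<longleftrightarrow> C \<subseteq> P \<and>
     (\<forall>F. finite F \<and> F \<subseteq> C \<longrightarrow> (\<exists>r\<in>P. \<forall>q\<in>F. le r q))"

definition sigma_centered :: "'a set \<Rightarrow> ('a \<Rightarrow> 'a \<Rightarrow> bool) \<Rightarrow> bool" where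
  "sigma_centered P le \<longleftrightarrow> (\<exists>C :: nat \<Rightarrow> 'a set. P = (\<Union>n. C n) \<and> (\<forall>n. centered P le (C n)))"

definition dense_in_poset :: "'a set \<Rightarrow> ('a \<Rightarrow> 'a \<Rightarrow> bool) \<Rightarrow> 'a set \<Rightarrow> bool" where
  "dense_in_poset P le D \<longleftrightarrow> D \<subseteq> P \<and> (\<forall>p\<in>P. \<exists>d\<in>D. le d p)"

definition poset_filter :: "'a set \<Rightarrow> ('a \<Rightarrow> 'a \<Rightarrow> bool) \<Rightarrow> 'a set \<Rightarrow> bool" where
  "poset_filter P le G \<longleftrightarrow> G \<subseteq> P \<and> G \<noteq> {} \<and>
     (\<forall>p\<in>G. \<forall>q\<in>P. le p q \<longrightarrow> q \<in> G) \<and>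
     (\<forall>p\<in>G. \<forall>q\<in>G. \<exists>r\<in>G. le r p \<and> le r q)"

text \<open>MA(sigma-centered), for (nonempty) posets whose underlying set is a subset of
  a fixed set of size continuum (here: sets of naturals).\<close>
definition MA_sigma_centered :: bool where
  "MA_sigma_centered \<longleftrightarrow>
    (\<forall>(P :: nat set set) le. P \<noteq> {} \<and> partial_order_on P {(p, q). p \<in> P \<and> q \<in> P \<and> le p q}
        \<and> sigma_centered P le \<longrightarrow>
      (\<forall>\<D>. \<D> \<prec> continuum_set \<and> (\<forall>D\<in>\<D>. dense_in_poset P le D) \<longrightarrow>
         (\<exists>G. poset_filter P le G \<and> (\<forall>D\<in>\<D>. G \<inter> D \<noteq> {}))))"

end

theory Submission
  imports Defs
begin

definition pre :: "nat \<Rightarrow> (nat \<Rightarrow> bool) \<Rightarrow> bool list" where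
  "pre n x = map x [0..<n]"

definition strs :: "nat \<Rightarrow> bool list set" where
  "strs n = {s. length s = n}"

lemma topspace_cantor[simp]: "topspace cantor_space = UNIV"
  unfolding cantor_space_def by (simp add: topspace_product_topology)

lemma open_coord: "openin cantor_space {x. x j = b}"
proof -
  have "openin cantor_space {x \<in> topspace cantor_space. x j \<in> {b}}"
    unfolding cantor_space_def
    by (rule openin_continuous_map_preimage[OF continuous_map_product_projection]) auto
  then show ?thesis by simp
qed

lemma length_pre[simp]: "length (pre n x) = n" by (simp add: pre_def)
lemma pre_strs[simp]: "pre n x \<in> strs n" by (simp add: strs_def)
lemma nth_pre[simp]: "j < n \<Longrightarrow> pre n x ! j = x j" by (simp add: pre_def)
lemma take_pre[simp]: "m \<le> n \<Longrightarrow> take m (pre n x) = pre m x"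
  by (simp add: pre_def take_map)

lemma pre_eq_iff: "pre n x = pre n y \<longleftrightarrow> (\<forall>j<n. x j = y j)"
  by (auto simp: pre_def)

lemma cyl_eq: "{x. pre n x = s} = (if length s = n then (\<Inter>j\<in>{..<n}. {x. x j = s!j}) else {})"
  by (auto simp: pre_def list_eq_iff_nth_eq)

lemma open_cyl: "openin cantor_space {x. pre n x = s}"
proof (cases "length s = n")
  case True
  show ?thesis
  proof (cases "n = 0")
    case True
    then have "{x. pre n x = s} = topspace cantor_space" using \<open>length s = n\<close>
      by (simp add: pre_def)
    then show ?thesis by (metis openin_topspace)
  next
    case False
    have "{x. pre n x = s} = \<Inter> ((\<lambda>j. {x. x j = s!j}) ` {..<n})"
      using cyl_eq True by simp
    moreover have "openin cantor_space (\<Inter> ((\<lambda>j. {x. x j = s!j}) ` {..<n}))"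
      by (rule openin_Inter) (use False open_coord in auto)
    ultimately show ?thesis by simp
  qed
next
  case False
  then show ?thesis by (simp add: cyl_eq)
qed

lemma open_neq: "openin cantor_space {x. x \<noteq> a}"
proof -
  have "{x. x \<noteq> a} = \<Union> (range (\<lambda>j. {x. x j = (\<not> a j)}))" by (auto simp: fun_eq_iff)
  moreover have "openin cantor_space (\<Union> (range (\<lambda>j. {x. x j = (\<not> a j)})))"
    by (rule openin_Union) (auto simp: open_coord)
  ultimately show ?thesis by simp
qed

lemma open_cyl_minus:
  assumes "finite F" shows "openin cantor_space ({x. pre n x = s} - F)"
proof -
  have "{x. pre n x = s} - F = {x. pre n x = s} \<inter> (\<Inter>a\<in>F. {x. x \<noteq> a})" by auto
  moreover have "openin cantor_space (\<Inter>a\<in>F. {x. x \<noteq> a})"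
  proof (cases "F = {}")
    case True then show ?thesis by (metis INF_empty topspace_cantor openin_topspace)
  next
    case False then show ?thesis by (rule_tac openin_Inter) (use assms open_neq in auto)
  qed
  ultimately show ?thesis by (simp add: openin_Int open_cyl)
qed

lemma cyl_infinite:
  assumes "length s = n" shows "infinite {x. pre n x = s}"
proof -
  define z where "z k = (\<lambda>j. if j < n then s!j else j = n + k)" for k
  have "inj z" unfolding inj_def z_def by (auto simp: fun_eq_iff)
  moreover have "range z \<subseteq> {x. pre n x = s}" using assms
    by (auto simp: z_def pre_def list_eq_iff_nth_eq)
  then have "range z \<subseteq> {x. pre n x = s}" .
  ultimately show ?thesis using finite_subset infinite_UNIV_nat finite_imageD by blast
qed

lemma dense_pick:
  assumes "cantor_space closure_of D = topspace cantor_space" "finite F" "length s = n"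
  shows "\<exists>z\<in>D. pre n z = s \<and> z \<notin> F"
proof -
  have "{x. pre n x = s} - F \<noteq> {}"
  proof
    assume "{x. pre n x = s} - F = {}"
    then have "{x. pre n x = s} \<subseteq> F" by blast
    then show False using cyl_infinite[OF assms(3)] assms(2) finite_subset by blast
  qed
  then have "D \<inter> ({x. pre n x = s} - F) \<noteq> {}"
    using assms(1) open_cyl_minus[OF assms(2)] unfolding dense_intersects_open by blast
  then show ?thesis by blast
qed


definition sw :: "'a \<Rightarrow> 'a \<Rightarrow> 'a \<Rightarrow> 'a" where
  "sw u v z = (if z = u then v else if z = v then u else z)"

lemma sw_bij: "u \<in> X \<Longrightarrow> v \<in> X \<Longrightarrow> bij_betw (sw u v) X X"
  by (rule bij_betw_byWitness[where f' = "sw u v"]) (auto simp: sw_def)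

definition injrel :: "('a \<times> 'b) set \<Rightarrow> bool" where
  "injrel H \<longleftrightarrow> (\<forall>(x,y)\<in>H. \<forall>(x',y')\<in>H. x = x' \<longleftrightarrow> y = y')"

lemma injrel_mono: "injrel S \<Longrightarrow> R \<subseteq> S \<Longrightarrow> injrel R"
  unfolding injrel_def by (smt (verit) case_prodI2 prod.case_eq_if subset_iff)

lemma injrelD: "injrel R \<Longrightarrow> (a,b)\<in>R \<Longrightarrow> (a',b')\<in>R \<Longrightarrow> a = a' \<longleftrightarrow> b = b'"
  unfolding injrel_def by fastforce
lemma perm_ext:
  assumes "finite R" "R \<subseteq> X \<times> X"
    "injrel R"
    "\<forall>(a,b)\<in>R. key a = key b"
  shows "\<exists>\<sigma>. bij_betw \<sigma> X X \<and> (\<forall>z\<in>X. key (\<sigma> z) = key z) \<and> (\<forall>(a,b)\<in>R. \<sigma> a = b)"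
  using assms
proof (induction R rule: finite_induct)
  case empty
  have "bij_betw (\<lambda>z. z) X X" by (simp add: bij_betw_def)
  then show ?case by blast
next
  case (insert ab R)
  obtain a b where ab: "ab = (a, b)" by force
  have "R \<subseteq> X \<times> X" "injrel R" "\<forall>(a,b)\<in>R. key a = key b"
    using insert.prems injrel_mono[OF insert.prems(2), of R] by blast+
  then obtain \<sigma> where s: "bij_betw \<sigma> X X" "\<forall>z\<in>X. key (\<sigma> z) = key z" "\<forall>(a,b)\<in>R. \<sigma> a = b"
    using insert.IH by blast
  have aX: "a \<in> X" and bX: "b \<in> X" using insert.prems(1) ab by auto
  have sa: "\<sigma> a \<in> X" using s(1) aX bij_betwE by blast
  have kab: "key a = key b" using insert.prems(3) ab by auto
  define \<tau> where "\<tau> = sw (\<sigma> a) b \<circ> \<sigma>"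
  have "bij_betw \<tau> X X" unfolding \<tau>_def using s(1) sw_bij[OF sa bX] by (rule bij_betw_trans)
  moreover have "\<forall>z\<in>X. key (\<tau> z) = key z"
  proof
    fix z assume z: "z \<in> X"
    have k1: "key (\<sigma> a) = key a" using s(2) aX by blast
    have k2: "key (\<sigma> z) = key z" using s(2) z by blast
    show "key (\<tau> z) = key z"
    proof (cases "\<sigma> z = \<sigma> a")
      case True
      have "z = a" using inj_onD[OF bij_betw_imp_inj_on[OF s(1)] True z aX] .
      then show ?thesis using True kab by (simp add: \<tau>_def sw_def)
    next
      case False
      show ?thesis
      proof (cases "\<sigma> z = b")
        case True
        then show ?thesis using False k1 k2 kab by (simp add: \<tau>_def sw_def)
      next
        case False2: False
        then show ?thesis using False k2 by (simp add: \<tau>_def sw_def)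
      qed
    qed
  qed
  moreover have "\<forall>(a',b')\<in>insert ab R. \<tau> a' = b'"
  proof
    fix p assume p: "p \<in> insert ab R"
    obtain a' b' where p': "p = (a', b')" by force
    show "case p of (a', b') \<Rightarrow> \<tau> a' = b'"
    proof (cases "p = ab")
      case True then show ?thesis using ab p' by (auto simp: \<tau>_def sw_def)
    next
      case False
      then have inR: "(a',b') \<in> R" using p p' by auto
      have i1: "(a,b) \<in> insert ab R" "(a',b') \<in> insert ab R" using ab inR by auto
      have iff: "a = a' \<longleftrightarrow> b = b'" using injrelD[OF insert.prems(2) i1(1) i1(2)] .
      have "a' \<noteq> a" using False p' ab iff by auto
      have "b' \<noteq> b" using False p' ab iff by auto
      have a'X: "a' \<in> X" using inR insert.prems(1) by auto
      have "\<sigma> a' \<noteq> \<sigma> a"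
      proof
        assume "\<sigma> a' = \<sigma> a"
        then have "a' = a" using inj_onD[OF bij_betw_imp_inj_on[OF s(1)] _ a'X aX] by simp
        then show False using \<open>a' \<noteq> a\<close> by simp
      qed
      moreover have "\<sigma> a' = b'" using s(3) inR by auto
      ultimately show ?thesis using p' \<open>b' \<noteq> b\<close> by (auto simp: \<tau>_def sw_def)
    qed
  qed
  ultimately show ?case by blast
qed

lemma sep_level:
  fixes S :: "(nat \<Rightarrow> bool) set"
  assumes "finite S"
  shows "\<exists>N. \<forall>x\<in>S. \<forall>x'\<in>S. x \<noteq> x' \<longrightarrow> (\<exists>j<N. x j \<noteq> x' j)"
proof -
  define d where "d p = (SOME j. fst p j \<noteq> snd p j)" for p :: "(nat \<Rightarrow> bool) \<times> (nat \<Rightarrow> bool)"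
  define N where "N = Suc (Max (d ` (S \<times> S)))"
  have "\<forall>x\<in>S. \<forall>x'\<in>S. x \<noteq> x' \<longrightarrow> (\<exists>j<N. x j \<noteq> x' j)"
  proof (intro ballI impI)
    fix x x' assume xs: "x \<in> S" "x' \<in> S" "x \<noteq> x'"
    then have "\<exists>j. x j \<noteq> x' j" by (auto simp: fun_eq_iff)
    then have "fst (x,x') (d (x,x')) \<noteq> snd (x,x') (d (x,x'))" unfolding d_def
      by (rule_tac someI_ex) simp
    then have "x (d (x,x')) \<noteq> x' (d (x,x'))" by simp
    moreover have "d (x,x') \<le> Max (d ` (S \<times> S))"
      using xs assms by (intro Max_ge) auto
    then have "d (x,x') < N" unfolding N_def by simp
    ultimately show "\<exists>j<N. x j \<noteq> x' j" by blast
  qed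
  then show ?thesis by blast
qed

lemma pre_sep:
  assumes "\<forall>x\<in>S. \<forall>x'\<in>S. x \<noteq> x' \<longrightarrow> (\<exists>j<N. x j \<noteq> x' j)" "N \<le> m" "x \<in> S" "x' \<in> S"
    "pre m x = pre m x'"
  shows "x = x'"
proof (rule ccontr)
  assume "x \<noteq> x'"
  then obtain j where "j < N" "x j \<noteq> x' j" using assms(1,3,4) by blast
  moreover have "j < m" using \<open>j < N\<close> assms(2) by simp
  ultimately show False using assms(5) unfolding pre_eq_iff by blast
qed

definition lift :: "nat \<Rightarrow> (bool list \<Rightarrow> bool list) \<Rightarrow> bool list \<Rightarrow> bool list" where
  "lift n \<pi> t = \<pi> (take n t) @ drop n t"

lemma lift_bij:
  assumes "bij_betw \<pi> (strs n) (strs n)" "n \<le> m"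
  shows "bij_betw (lift n \<pi>) (strs m) (strs m)"
proof (rule bij_betw_byWitness[where f' = "lift n (inv_into (strs n) \<pi>)"])
  have ps: "\<And>s. s \<in> strs n \<Longrightarrow> \<pi> s \<in> strs n" using assms(1) bij_betwE by blast
  have ips: "\<And>s. s \<in> strs n \<Longrightarrow> inv_into (strs n) \<pi> s \<in> strs n"
    using assms(1) by (meson bij_betwE bij_betw_inv_into)
  have tk: "\<And>t. t \<in> strs m \<Longrightarrow> take n t \<in> strs n" using assms(2) by (auto simp: strs_def)
  show "\<forall>a\<in>strs m. lift n (inv_into (strs n) \<pi>) (lift n \<pi> a) = a"
  proof
    fix a assume a: "a \<in> strs m"
    have l: "length (\<pi> (take n a)) = n" using ps[OF tk[OF a]] by (simp add: strs_def)
    show "lift n (inv_into (strs n) \<pi>) (lift n \<pi> a) = a"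
      unfolding lift_def using l assms(1) tk[OF a] by (simp add: bij_betw_inv_into_left)
  qed
  show "\<forall>a\<in>strs m. lift n \<pi> (lift n (inv_into (strs n) \<pi>) a) = a"
  proof
    fix a assume a: "a \<in> strs m"
    have l: "length (inv_into (strs n) \<pi> (take n a)) = n" using ips[OF tk[OF a]] by (simp add: strs_def)
    show "lift n \<pi> (lift n (inv_into (strs n) \<pi>) a) = a"
      unfolding lift_def using l assms(1) tk[OF a] by (simp add: bij_betw_inv_into_right)
  qed
  show "lift n \<pi> ` strs m \<subseteq> strs m"
  proof
    fix b assume "b \<in> lift n \<pi> ` strs m"
    then obtain a where a: "a \<in> strs m" "b = lift n \<pi> a" by blast
    then show "b \<in> strs m" using ps[OF tk[OF a(1)]] assms(2) by (auto simp: strs_def lift_def)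
  qed
  show "lift n (inv_into (strs n) \<pi>) ` strs m \<subseteq> strs m"
  proof
    fix b assume "b \<in> lift n (inv_into (strs n) \<pi>) ` strs m"
    then obtain a where a: "a \<in> strs m" "b = lift n (inv_into (strs n) \<pi>) a" by blast
    then show "b \<in> strs m" using ips[OF tk[OF a(1)]] assms(2) by (auto simp: strs_def lift_def)
  qed
qed

lemma take_lift:
  assumes "bij_betw \<pi> (strs n) (strs n)" "t \<in> strs m" "n \<le> m"
  shows "take n (lift n \<pi> t) = \<pi> (take n t)"
proof -
  have "take n t \<in> strs n" using assms by (auto simp: strs_def)
  then have "length (\<pi> (take n t)) = n" using assms(1) bij_betwE by (fastforce simp: strs_def)
  then show ?thesis by (simp add: lift_def)
qed


lemma refine:
  assumes pi: "bij_betw \<pi> (strs n) (strs n)" and fin: "finite H" and inj: "injrel H"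
    and comp: "\<forall>(x,y)\<in>H. \<pi> (pre n x) = pre n y"
  shows "\<exists>n' \<pi>'. n \<le> n' \<and> k \<le> n' \<and> bij_betw \<pi>' (strs n') (strs n') \<and> (\<forall>t. t \<notin> strs n' \<longrightarrow> \<pi>' t = t)
     \<and> (\<forall>t\<in>strs n'. take n (\<pi>' t) = \<pi> (take n t))
     \<and> (\<forall>(x,y)\<in>H. \<pi>' (pre n' x) = pre n' y)
     \<and> (\<forall>(x,y)\<in>H. \<forall>(x',y')\<in>H. pre n' x = pre n' x' \<longrightarrow> x = x')"
proof -
  let ?S = "Domain H \<union> Range H"
  have "finite ?S" using fin by (simp add: finite_Domain finite_Range)
  then obtain N where N: "\<forall>x\<in>?S. \<forall>x'\<in>?S. x \<noteq> x' \<longrightarrow> (\<exists>j<N. x j \<noteq> x' j)"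
    using sep_level by blast
  define m where "m = max N (max n k)"
  have m: "N \<le> m" "n \<le> m" "k \<le> m" by (auto simp: m_def)
  have sepx: "\<And>x y x' y'. (x,y) \<in> H \<Longrightarrow> (x',y') \<in> H \<Longrightarrow> pre m x = pre m x' \<Longrightarrow> x = x'"
    using pre_sep[OF N m(1)] by blast
  have sepy: "\<And>x y x' y'. (x,y) \<in> H \<Longrightarrow> (x',y') \<in> H \<Longrightarrow> pre m y = pre m y' \<Longrightarrow> y = y'"
    using pre_sep[OF N m(1)] by blast
  define R where "R = (\<lambda>(x,y). (lift n \<pi> (pre m x), pre m y)) ` H"
  have lb: "bij_betw (lift n \<pi>) (strs m) (strs m)" using lift_bij[OF pi m(2)] .
  have "finite R" using fin by (simp add: R_def)
  moreover have "R \<subseteq> strs m \<times> strs m" using lb by (auto simp: R_def bij_betwE)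
  moreover have "injrel R"
    unfolding injrel_def
  proof (clarsimp simp: R_def)
    fix x y x' y' assume h: "(x,y) \<in> H" "(x',y') \<in> H"
    have "lift n \<pi> (pre m x) = lift n \<pi> (pre m x') \<longleftrightarrow> pre m x = pre m x'"
      using lb by (metis bij_betw_inv_into_left pre_strs)
    also have "\<dots> \<longleftrightarrow> x = x'" using sepx[OF h] by auto
    also have "\<dots> \<longleftrightarrow> y = y'" using injrelD[OF inj h] .
    also have "\<dots> \<longleftrightarrow> pre m y = pre m y'" using sepy[OF h] by auto
    finally show "lift n \<pi> (pre m x) = lift n \<pi> (pre m x') \<longleftrightarrow> pre m y = pre m y'" .
  qed
  moreover have "\<forall>(a,b)\<in>R. take n a = take n b"
  proof (clarsimp simp: R_def)
    fix x y assume h: "(x,y) \<in> H"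
    have "take n (lift n \<pi> (pre m x)) = \<pi> (pre n x)"
      using take_lift[OF pi pre_strs m(2)] m(2) by simp
    also have "\<dots> = pre n y" using comp h by auto
    finally show "take n (lift n \<pi> (pre m x)) = take n (pre m y)" using m(2) by simp
  qed
  ultimately obtain \<sigma> where s: "bij_betw \<sigma> (strs m) (strs m)" "\<forall>z\<in>strs m. take n (\<sigma> z) = take n z"
    "\<forall>(a,b)\<in>R. \<sigma> a = b"
    using perm_ext[of R "strs m" "take n"] by blast
  define \<pi>' where "\<pi>' t = (if t \<in> strs m then \<sigma> (lift n \<pi> t) else t)" for t
  have "bij_betw (\<sigma> \<circ> lift n \<pi>) (strs m) (strs m)" using lb s(1) by (rule bij_betw_trans)
  then have b': "bij_betw \<pi>' (strs m) (strs m)"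
    by (rule bij_betw_cong[THEN iffD1, rotated]) (simp add: \<pi>'_def)
  have "\<forall>t\<in>strs m. take n (\<pi>' t) = \<pi> (take n t)"
  proof
    fix t assume t: "t \<in> strs m"
    have "lift n \<pi> t \<in> strs m" using lb t bij_betwE by blast
    then show "take n (\<pi>' t) = \<pi> (take n t)" using s(2) t take_lift[OF pi t m(2)] by (simp add: \<pi>'_def)
  qed
  moreover have "\<forall>(x,y)\<in>H. \<pi>' (pre m x) = pre m y"
    using s(3) by (auto simp: R_def \<pi>'_def)
  moreover have "\<forall>(x,y)\<in>H. \<forall>(x',y')\<in>H. pre m x = pre m x' \<longrightarrow> x = x'"
    using sepx by blast
  ultimately show ?thesis using b' m by (intro exI[of _ m] exI[of _ \<pi>']) (auto simp: \<pi>'_def)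
qed


type_synonym cnd = "nat \<times> (bool list \<Rightarrow> bool list) \<times> ((nat \<Rightarrow> bool) \<times> (nat \<Rightarrow> bool)) set"

definition lv :: "cnd \<Rightarrow> nat" where "lv p = fst p"
definition pm :: "cnd \<Rightarrow> bool list \<Rightarrow> bool list" where "pm p = fst (snd p)"
definition hh :: "cnd \<Rightarrow> ((nat \<Rightarrow> bool) \<times> (nat \<Rightarrow> bool)) set" where "hh p = snd (snd p)"

lemma lv_simp[simp]: "lv (n, \<pi>, H) = n" and pm_simp[simp]: "pm (n, \<pi>, H) = \<pi>" and hh_simp[simp]: "hh (n, \<pi>, H) = H"
  by (auto simp: lv_def pm_def hh_def)

lemma cnd_eq: "lv p = lv q \<Longrightarrow> pm p = pm q \<Longrightarrow> hh p = hh q \<Longrightarrow> p = q"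
  by (simp add: lv_def pm_def hh_def prod_eq_iff)

definition cle :: "cnd \<Rightarrow> cnd \<Rightarrow> bool" where
  "cle p q \<longleftrightarrow> lv q \<le> lv p \<and> hh q \<subseteq> hh p \<and>
     (\<forall>t\<in>strs (lv p). take (lv q) (pm p t) = pm q (take (lv q) t))"

locale hsetup =
  fixes I :: "'i set" and A B :: "'i \<Rightarrow> (nat \<Rightarrow> bool) set"
  assumes A_count: "\<forall>\<alpha>\<in>I. countable (A \<alpha>)"
    and A_dense: "\<forall>\<alpha>\<in>I. cantor_space closure_of (A \<alpha>) = topspace cantor_space"
    and B_count: "\<forall>\<alpha>\<in>I. countable (B \<alpha>)"
    and B_dense: "\<forall>\<alpha>\<in>I. cantor_space closure_of (B \<alpha>) = topspace cantor_space"
    and A_disj: "\<forall>\<alpha>\<in>I. \<forall>\<beta>\<in>I. \<alpha> \<noteq> \<beta> \<longrightarrow> A \<alpha> \<inter> A \<beta> = {}"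
    and B_disj: "\<forall>\<alpha>\<in>I. \<forall>\<beta>\<in>I. \<alpha> \<noteq> \<beta> \<longrightarrow> B \<alpha> \<inter> B \<beta> = {}"
begin

definition good :: "(nat \<Rightarrow> bool) \<Rightarrow> (nat \<Rightarrow> bool) \<Rightarrow> bool" where
  "good x y \<longleftrightarrow> (\<exists>\<alpha>\<in>I. x \<in> A \<alpha> \<and> y \<in> B \<alpha>)"

definition cond :: "cnd \<Rightarrow> bool" where
  "cond p \<longleftrightarrow> bij_betw (pm p) (strs (lv p)) (strs (lv p)) \<and> (\<forall>t. t \<notin> strs (lv p) \<longrightarrow> pm p t = t)
     \<and> finite (hh p) \<and> (\<forall>(x,y)\<in>hh p. good x y) \<and> injrel (hh p)
     \<and> (\<forall>(x,y)\<in>hh p. pm p (pre (lv p) x) = pre (lv p) y)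
     \<and> (\<forall>(x,y)\<in>hh p. \<forall>(x',y')\<in>hh p. pre (lv p) x = pre (lv p) x' \<longrightarrow> x = x')"

lemma cond_bij: "cond p \<Longrightarrow> bij_betw (pm p) (strs (lv p)) (strs (lv p))" by (simp add: cond_def)
lemma cond_id: "cond p \<Longrightarrow> t \<notin> strs (lv p) \<Longrightarrow> pm p t = t" by (simp add: cond_def)
lemma cond_fin: "cond p \<Longrightarrow> finite (hh p)" by (simp add: cond_def)
lemma cond_good: "cond p \<Longrightarrow> (x,y) \<in> hh p \<Longrightarrow> good x y" unfolding cond_def by fast
lemma cond_goodall: "cond p \<Longrightarrow> \<forall>(x,y)\<in>hh p. good x y" unfolding cond_def by simp
lemma cond_inj: "cond p \<Longrightarrow> injrel (hh p)" by (simp add: cond_def)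
lemma cond_comp: "cond p \<Longrightarrow> (x,y) \<in> hh p \<Longrightarrow> pm p (pre (lv p) x) = pre (lv p) y" unfolding cond_def by fast
lemma cond_compall: "cond p \<Longrightarrow> \<forall>(x,y)\<in>hh p. pm p (pre (lv p) x) = pre (lv p) y" unfolding cond_def by simp
lemma cond_one: "cond p \<Longrightarrow> (x,y) \<in> hh p \<Longrightarrow> (x',y') \<in> hh p \<Longrightarrow> pre (lv p) x = pre (lv p) x' \<Longrightarrow> x = x'"
  unfolding cond_def by fast

lemma cond_pm: "cond p \<Longrightarrow> t \<in> strs (lv p) \<Longrightarrow> pm p t \<in> strs (lv p)"
  using cond_bij bij_betwE by blast

lemma cle_refl: assumes c: "cond p" shows "cle p p"
proof -
  have "\<forall>t\<in>strs (lv p). take (lv p) (pm p t) = pm p (take (lv p) t)"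
  proof
    fix t assume t: "t \<in> strs (lv p)"
    have "pm p t \<in> strs (lv p)" using cond_pm[OF c t] .
    then show "take (lv p) (pm p t) = pm p (take (lv p) t)" using t by (simp add: strs_def)
  qed
  then show ?thesis unfolding cle_def by simp
qed

lemma cle_trans: assumes pq0: "cle p q" and qr0: "cle q r" shows "cle p r"
proof -
  have pq: "lv q \<le> lv p" "hh q \<subseteq> hh p" "\<forall>t\<in>strs (lv p). take (lv q) (pm p t) = pm q (take (lv q) t)"
    using pq0 unfolding cle_def by simp_all
  have qr: "lv r \<le> lv q" "hh r \<subseteq> hh q" "\<forall>t\<in>strs (lv q). take (lv r) (pm q t) = pm r (take (lv r) t)"
    using qr0 unfolding cle_def by simp_all
  have "\<forall>t\<in>strs (lv p). take (lv r) (pm p t) = pm r (take (lv r) t)"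
  proof
    fix t assume t: "t \<in> strs (lv p)"
    have t': "take (lv q) t \<in> strs (lv q)" using t pq(1) by (simp add: strs_def)
    have "take (lv r) (pm p t) = take (lv r) (take (lv q) (pm p t))" using qr(1) by (simp add: min_absorb2)
    also have "\<dots> = take (lv r) (pm q (take (lv q) t))" using pq(3) t by simp
    also have "\<dots> = pm r (take (lv r) (take (lv q) t))" using qr(3) t' by simp
    also have "\<dots> = pm r (take (lv r) t)" using qr(1) by (simp add: min_absorb2)
    finally show "take (lv r) (pm p t) = pm r (take (lv r) t)" .
  qed
  moreover have "lv r \<le> lv p" using pq(1) qr(1) by simp
  moreover have "hh r \<subseteq> hh p" using pq(2) qr(2) by simp
  ultimately show ?thesis unfolding cle_def by simp
qed

lemma cle_antisym: assumes "cond p" "cond q" "cle p q" "cle q p" shows "p = q"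
proof (rule cnd_eq)
  show l: "lv p = lv q" using assms unfolding cle_def by simp
  show "hh p = hh q" using assms unfolding cle_def by blast
  show "pm p = pm q"
  proof
    fix t show "pm p t = pm q t"
    proof (cases "t \<in> strs (lv p)")
      case True
      have "pm p t \<in> strs (lv p)" using cond_pm[OF assms(1) True] .
      then have "take (lv q) (pm p t) = pm p t" using l by (simp add: strs_def)
      moreover have "take (lv q) t = t" using True l by (simp add: strs_def)
      ultimately show ?thesis using assms(3) True unfolding cle_def by simp
    next
      case False
      then show ?thesis using cond_id[OF assms(1)] cond_id[OF assms(2)] l by simp
    qed
  qed
qed

lemma ext:
  assumes pi: "bij_betw \<pi> (strs n) (strs n)" and fin: "finite H" and inj: "injrel H"
    and gd: "\<forall>(x,y)\<in>H. good x y"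
    and comp: "\<forall>(x,y)\<in>H. \<pi> (pre n x) = pre n y"
  shows "\<exists>r. cond r \<and> k \<le> lv r \<and> n \<le> lv r \<and> hh r = H \<and> (\<forall>t\<in>strs (lv r). take n (pm r t) = \<pi> (take n t))"
proof -
  obtain n' \<pi>' where r: "n \<le> n'" "k \<le> n'" "bij_betw \<pi>' (strs n') (strs n')" "\<forall>t. t \<notin> strs n' \<longrightarrow> \<pi>' t = t"
     "\<forall>t\<in>strs n'. take n (\<pi>' t) = \<pi> (take n t)"
     "\<forall>(x,y)\<in>H. \<pi>' (pre n' x) = pre n' y"
     "\<forall>(x,y)\<in>H. \<forall>(x',y')\<in>H. pre n' x = pre n' x' \<longrightarrow> x = x'"
    using refine[OF pi fin inj comp, of k] by blast
  have "cond (n', \<pi>', H)" unfolding cond_def lv_simp pm_simp hh_simp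
    using r(3,4,6,7) fin inj gd by (intro conjI)
  then show ?thesis using r by (intro exI[of _ "(n', \<pi>', H)"]) simp
qed

lemma ext1:
  assumes c: "cond p" and fin: "finite H" and inj: "injrel H" and sub: "hh p \<subseteq> H"
    and gd: "\<forall>(x,y)\<in>H. good x y"
    and comp: "\<forall>(x,y)\<in>H. pm p (pre (lv p) x) = pre (lv p) y"
  shows "\<exists>r. cond r \<and> k \<le> lv r \<and> cle r p \<and> hh r = H"
proof -
  have pi: "bij_betw (pm p) (strs (lv p)) (strs (lv p))" using cond_bij[OF c] .
  obtain r where r: "cond r" "k \<le> lv r" "lv p \<le> lv r" "hh r = H"
    "\<forall>t\<in>strs (lv r). take (lv p) (pm r t) = pm p (take (lv p) t)"
    using ext[OF pi fin inj gd comp, of k] by blast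
  have "cle r p" unfolding cle_def using r sub by simp
  then show ?thesis using r by blast
qed

end

lemma injrelI: assumes "\<And>a b a' b'. (a,b)\<in>H \<Longrightarrow> (a',b')\<in>H \<Longrightarrow> a = a' \<longleftrightarrow> b = b'" shows "injrel H"
  unfolding injrel_def
proof (intro ballI, clarify)
  fix a b a' b' assume "(a,b) \<in> H" "(a',b') \<in> H"
  then show "a = a' \<longleftrightarrow> b = b'" by (rule assms)
qed

lemma injrel_insert:
  assumes "injrel H" "x \<notin> Domain H" "y \<notin> Range H"
  shows "injrel (insert (x,y) H)"
proof (rule injrelI)
  fix a b a' b' assume p: "(a,b) \<in> insert (x,y) H" and q: "(a',b') \<in> insert (x,y) H"
  show "a = a' \<longleftrightarrow> b = b'"
  proof (cases "(a,b) = (x,y)")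
    case True
    show ?thesis
    proof (cases "(a',b') = (x,y)")
      case True then show ?thesis using \<open>(a,b) = (x,y)\<close> by simp
    next
      case False
      then have "(a',b') \<in> H" using q by auto
      then have "a' \<noteq> x" "b' \<noteq> y" using assms(2,3) by force+
      then show ?thesis using True by simp
    qed
  next
    case False
    then have pH: "(a,b) \<in> H" using p by auto
    then have nx: "a \<noteq> x" "b \<noteq> y" using assms(2,3) by force+
    show ?thesis
    proof (cases "(a',b') = (x,y)")
      case True then show ?thesis using nx by simp
    next
      case False
      then have "(a',b') \<in> H" using q by auto
      then show ?thesis using injrelD[OF assms(1) pH] by simp
    qed
  qed
qed

lemma set_enum: "set (List.n_lists n [True, False]) = strs n"
  by (auto simp: set_n_lists strs_def)

lemma eq_by_pre:
  assumes "\<forall>j. \<exists>m. j < m \<and> pre m a = pre m b" shows "a = b"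
proof
  fix j
  obtain m where "j < m" "pre m a = pre m b" using assms by blast
  then show "a j = b j" unfolding pre_eq_iff by blast
qed

lemma open_pre_preimage: "openin cantor_space {x. g (pre m x) \<in> U}"
proof -
  have "{x. g (pre m x) \<in> U} = \<Union> ((\<lambda>s. {x. pre m x = s}) ` {s. g s \<in> U})" by auto
  moreover have "openin cantor_space (\<Union> ((\<lambda>s. {x. pre m x = s}) ` {s. g s \<in> U}))"
    by (rule openin_Union) (auto simp: open_cyl)
  ultimately show ?thesis by simp
qed

lemma cont_lim:
  assumes "\<forall>j. \<exists>m g. \<forall>x. F x j = g (pre m x)"
  shows "continuous_map cantor_space cantor_space F"
proof -
  have "\<forall>k. continuous_map cantor_space (discrete_topology UNIV) (\<lambda>x. F x k)"
  proof
    fix k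
    obtain m g where mg: "\<forall>x. F x k = g (pre m x)" using assms by blast
    have "\<forall>U. openin cantor_space {x \<in> topspace cantor_space. F x k \<in> U}"
      using mg open_pre_preimage[of g m] by simp
    then show "continuous_map cantor_space (discrete_topology UNIV) (\<lambda>x. F x k)"
      unfolding continuous_map_def by simp
  qed
  then have "continuous_map cantor_space (product_topology (\<lambda>_. discrete_topology (UNIV :: bool set)) UNIV) F"
    by (simp add: continuous_map_componentwise_UNIV)
  then show ?thesis unfolding cantor_space_def[symmetric] .
qed

lemma limit_gen:
  fixes G :: "cnd set" and \<phi> :: "cnd \<Rightarrow> bool list \<Rightarrow> bool list"
  assumes unb: "\<forall>j. \<exists>p\<in>G. j < lv p"
    and dir: "\<forall>p\<in>G. \<forall>q\<in>G. \<exists>r\<in>G. lv p \<le> lv r \<and> lv q \<le> lv r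
       \<and> (\<forall>t\<in>strs (lv r). take (lv p) (\<phi> r t) = \<phi> p (take (lv p) t))
       \<and> (\<forall>t\<in>strs (lv r). take (lv q) (\<phi> r t) = \<phi> q (take (lv q) t))"
    and maps: "\<forall>p\<in>G. \<forall>t\<in>strs (lv p). \<phi> p t \<in> strs (lv p)"
  shows "\<exists>F. (\<forall>p\<in>G. \<forall>x. pre (lv p) (F x) = \<phi> p (pre (lv p) x)) \<and> continuous_map cantor_space cantor_space F"
proof -
  define P where "P j = (SOME p. p \<in> G \<and> j < lv p)" for j
  have P: "P j \<in> G \<and> j < lv (P j)" for j unfolding P_def using unb by (metis (mono_tags, lifting) someI_ex)
  define F where "F x = (\<lambda>j. \<phi> (P j) (pre (lv (P j)) x) ! j)" for x
  have agree: "\<phi> p (pre (lv p) x) ! j = \<phi> q (pre (lv q) x) ! j"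
    if pq: "p \<in> G" "q \<in> G" "j < lv p" "j < lv q" for p q x j
  proof -
    obtain r where r: "r \<in> G" "lv p \<le> lv r" "lv q \<le> lv r"
      "\<forall>t\<in>strs (lv r). take (lv p) (\<phi> r t) = \<phi> p (take (lv p) t)"
      "\<forall>t\<in>strs (lv r). take (lv q) (\<phi> r t) = \<phi> q (take (lv q) t)"
      using bspec[OF bspec[OF dir pq(1)] pq(2)] by blast
    have "\<phi> p (pre (lv p) x) = take (lv p) (\<phi> r (pre (lv r) x))" using r(2,4) by simp
    then have 1: "\<phi> p (pre (lv p) x) ! j = \<phi> r (pre (lv r) x) ! j" using pq(3) by simp
    have "\<phi> q (pre (lv q) x) = take (lv q) (\<phi> r (pre (lv r) x))" using r(3,5) by simp
    then have 2: "\<phi> q (pre (lv q) x) ! j = \<phi> r (pre (lv r) x) ! j" using pq(4) by simp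
    show ?thesis using 1 2 by simp
  qed
  have pre_F: "pre (lv p) (F x) = \<phi> p (pre (lv p) x)" if "p \<in> G" for p x
  proof (rule nth_equalityI)
    have "\<phi> p (pre (lv p) x) \<in> strs (lv p)" using maps that by simp
    then show "length (pre (lv p) (F x)) = length (\<phi> p (pre (lv p) x))" by (simp add: strs_def)
    fix j assume "j < length (pre (lv p) (F x))"
    then have j: "j < lv p" by simp
    then show "pre (lv p) (F x) ! j = \<phi> p (pre (lv p) x) ! j"
      using agree[of "P j" p j x] P[of j] that j by (simp add: F_def)
  qed
  have "\<forall>j. \<exists>m g. \<forall>x. F x j = g (pre m x)"
  proof
    fix j show "\<exists>m g. \<forall>x. F x j = g (pre m x)"
      by (rule exI[of _ "lv (P j)"], rule exI[of _ "\<lambda>s. \<phi> (P j) s ! j"]) (simp add: F_def)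
  qed
  then have "continuous_map cantor_space cantor_space F" by (rule cont_lim)
  then show ?thesis using pre_F by blast
qed

context hsetup
begin

lemma disjA: assumes "\<alpha> \<in> I" "\<beta> \<in> I" "x \<in> A \<alpha>" "x \<in> A \<beta>" shows "\<alpha> = \<beta>"
proof (rule ccontr)
  assume "\<alpha> \<noteq> \<beta>"
  then have "A \<alpha> \<inter> A \<beta> = {}" using A_disj assms(1,2) by simp
  then show False using assms(3,4) by auto
qed

lemma disjB: assumes "\<alpha> \<in> I" "\<beta> \<in> I" "x \<in> B \<alpha>" "x \<in> B \<beta>" shows "\<alpha> = \<beta>"
proof (rule ccontr)
  assume "\<alpha> \<noteq> \<beta>"
  then have "B \<alpha> \<inter> B \<beta> = {}" using B_disj assms(1,2) by simp
  then show False using assms(3,4) by auto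
qed

lemma aof_eq:
  assumes "\<alpha> \<in> I" "x \<in> A \<alpha>" shows "(SOME \<beta>. \<beta> \<in> I \<and> x \<in> A \<beta>) = \<alpha>"
proof (rule some_equality)
  show "\<alpha> \<in> I \<and> x \<in> A \<alpha>" using assms by simp
  fix \<beta> assume "\<beta> \<in> I \<and> x \<in> A \<beta>"
  then show "\<beta> = \<alpha>" using disjA assms by blast
qed

lemma bof_eq:
  assumes "\<alpha> \<in> I" "x \<in> B \<alpha>" shows "(SOME \<beta>. \<beta> \<in> I \<and> x \<in> B \<beta>) = \<alpha>"
proof (rule some_equality)
  show "\<alpha> \<in> I \<and> x \<in> B \<alpha>" using assms by simp
  fix \<beta> assume "\<beta> \<in> I \<and> x \<in> B \<beta>"
  then show "\<beta> = \<alpha>" using disjB assms by blast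
qed

definition iA :: "(nat \<Rightarrow> bool) \<Rightarrow> nat" where
  "iA x = to_nat_on (A (SOME \<beta>. \<beta> \<in> I \<and> x \<in> A \<beta>)) x"
definition iB :: "(nat \<Rightarrow> bool) \<Rightarrow> nat" where
  "iB y = to_nat_on (B (SOME \<beta>. \<beta> \<in> I \<and> y \<in> B \<beta>)) y"

definition code :: "cnd \<Rightarrow> bool list \<Rightarrow> (nat \<times> nat) option" where
  "code p s = (if \<exists>z\<in>hh p. pre (lv p) (fst z) = s
     then Some (iA (fst (SOME z. z \<in> hh p \<and> pre (lv p) (fst z) = s)), iB (snd (SOME z. z \<in> hh p \<and> pre (lv p) (fst z) = s)))
     else None)"

definition ckey :: "cnd \<Rightarrow> nat \<times> bool list list \<times> (nat \<times> nat) option list" where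
  "ckey p = (lv p, map (pm p) (List.n_lists (lv p) [True, False]), map (code p) (List.n_lists (lv p) [True, False]))"

lemma code_at:
  assumes c: "cond p" and xy: "(x,y) \<in> hh p"
  shows "code p (pre (lv p) x) = Some (iA x, iB y)"
proof -
  let ?s = "pre (lv p) x"
  have ex: "\<exists>z. z \<in> hh p \<and> pre (lv p) (fst z) = ?s" using xy by force
  define z where "z = (SOME z. z \<in> hh p \<and> pre (lv p) (fst z) = ?s)"
  have z: "z \<in> hh p" "pre (lv p) (fst z) = ?s" unfolding z_def using someI_ex[OF ex] by blast+
  obtain a b where ab: "z = (a,b)" by force
  have "a = x" using cond_one[OF c, of a b x y] z ab xy by simp
  moreover have "b = y" using injrelD[OF cond_inj[OF c], of a b x y] z ab xy \<open>a = x\<close> by simp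
  ultimately have "z = (x,y)" using ab by simp
  moreover have "\<exists>z\<in>hh p. pre (lv p) (fst z) = ?s" using xy by force
  ultimately show ?thesis unfolding code_def z_def[symmetric] by simp
qed

lemma same_key:
  assumes "cond p" "cond q" "ckey p = ckey q"
  shows "lv p = lv q" "pm p = pm q" "\<forall>s\<in>strs (lv p). code p s = code q s"
proof -
  show l: "lv p = lv q" using assms(3) unfolding ckey_def by simp
  have m1: "map (pm p) (List.n_lists (lv p) [True, False]) = map (pm q) (List.n_lists (lv p) [True, False])"
    using assms(3) l unfolding ckey_def by simp
  have m2: "map (code p) (List.n_lists (lv p) [True, False]) = map (code q) (List.n_lists (lv p) [True, False])"
    using assms(3) l unfolding ckey_def by simp
  show "\<forall>s\<in>strs (lv p). code p s = code q s" using m2 unfolding map_eq_conv set_enum by simp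
  show "pm p = pm q"
  proof
    fix t show "pm p t = pm q t"
    proof (cases "t \<in> strs (lv p)")
      case True then show ?thesis using m1 unfolding map_eq_conv set_enum by simp
    next
      case False then show ?thesis using cond_id[OF assms(1)] cond_id[OF assms(2)] l by simp
    qed
  qed
qed

lemma iB_inj:
  assumes "\<alpha> \<in> I" "y \<in> B \<alpha>" "y' \<in> B \<alpha>" "iB y = iB y'" shows "y = y'"
proof -
  have "to_nat_on (B \<alpha>) y = to_nat_on (B \<alpha>) y'"
    using assms(4) bof_eq[OF assms(1,2)] bof_eq[OF assms(1,3)] unfolding iB_def by simp
  then show ?thesis using inj_on_to_nat_on[of "B \<alpha>"] B_count assms(1,2,3) by (meson inj_onD)
qed

lemma iA_inj:
  assumes "\<alpha> \<in> I" "y \<in> A \<alpha>" "y' \<in> A \<alpha>" "iA y = iA y'" shows "y = y'"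
proof -
  have "to_nat_on (A \<alpha>) y = to_nat_on (A \<alpha>) y'"
    using assms(4) aof_eq[OF assms(1,2)] aof_eq[OF assms(1,3)] unfolding iA_def by simp
  then show ?thesis using inj_on_to_nat_on[of "A \<alpha>"] A_count assms(1,2,3) by (meson inj_onD)
qed

lemma centered_union:
  assumes fin: "finite F" and p0: "p0 \<in> F" and cF: "\<forall>q\<in>F. cond q" and kF: "\<forall>q\<in>F. ckey q = ckey p0"
  shows "\<exists>r. cond r \<and> (\<forall>q\<in>F. cle r q)"
proof -
  let ?n = "lv p0" and ?\<pi> = "pm p0"
  define H where "H = \<Union> (hh ` F)"
  have c0: "cond p0" using cF p0 by blast
  have sk: "lv q = ?n" "pm q = ?\<pi>" "\<forall>s\<in>strs ?n. code q s = code p0 s" if "q \<in> F" for q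
    using same_key[OF cF[rule_format, OF that] c0 kF[rule_format, OF that]] by auto
  have pi: "bij_betw ?\<pi> (strs ?n) (strs ?n)" using cond_bij[OF c0] .
  have finH: "finite H" unfolding H_def using fin cF cond_fin by (intro finite_UN_I) auto
  have gd: "\<forall>(x,y)\<in>H. good x y" unfolding H_def using cF cond_good by blast
  have comp1: "?\<pi> (pre ?n x) = pre ?n y" if xyH: "(x,y) \<in> H" for x y
  proof -
    have "(x,y) \<in> \<Union> (hh ` F)" using xyH H_def by simp
    then obtain q where q: "q \<in> F" "(x,y) \<in> hh q" by blast
    show ?thesis using cond_comp[OF cF[rule_format, OF q(1)] q(2)] sk[OF q(1)] by simp
  qed
  then have comp: "\<forall>(x,y)\<in>H. ?\<pi> (pre ?n x) = pre ?n y" by blast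
  have codeH: "code p0 (pre ?n x) = Some (iA x, iB y)" if xyH2: "(x,y) \<in> H" for x y
  proof -
    have "(x,y) \<in> \<Union> (hh ` F)" using xyH2 H_def by simp
    then obtain q where q: "q \<in> F" "(x,y) \<in> hh q" by blast
    have "code q (pre (lv q) x) = Some (iA x, iB y)" using code_at[OF cF[rule_format, OF q(1)] q(2)] .
    then show ?thesis using sk[OF q(1)] by simp
  qed
  have injH: "injrel H"
  proof (rule injrelI)
    fix x y x' y' assume h1: "(x,y) \<in> H" and h2: "(x',y') \<in> H"
    obtain \<alpha> where \<alpha>: "\<alpha> \<in> I" "x \<in> A \<alpha>" "y \<in> B \<alpha>" using gd h1 unfolding good_def by blast
    obtain \<beta> where \<beta>: "\<beta> \<in> I" "x' \<in> A \<beta>" "y' \<in> B \<beta>" using gd h2 unfolding good_def by blast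
    show "x = x' \<longleftrightarrow> y = y'"
    proof
      assume "x = x'"
      then have "\<alpha> = \<beta>" using \<alpha> \<beta> disjA by blast
      have "Some (iA x, iB y) = Some (iA x', iB y')" using codeH[OF h1] codeH[OF h2] \<open>x = x'\<close> by simp
      then show "y = y'" using iB_inj[OF \<alpha>(1,3)] \<beta>(3) \<open>\<alpha> = \<beta>\<close> by simp
    next
      assume "y = y'"
      then have "\<alpha> = \<beta>" using \<alpha> \<beta> disjB by blast
      have "?\<pi> (pre ?n x) = ?\<pi> (pre ?n x')" using comp1[OF h1] comp1[OF h2] \<open>y = y'\<close> by simp
      then have "pre ?n x = pre ?n x'" using bij_betw_imp_inj_on[OF pi] by (simp add: inj_on_eq_iff)
      then have "Some (iA x, iB y) = Some (iA x', iB y')" using codeH[OF h1] codeH[OF h2] by simp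
      then show "x = x'" using iA_inj[OF \<alpha>(1,2)] \<beta>(2) \<open>\<alpha> = \<beta>\<close> by simp
    qed
  qed
  obtain r where r: "cond r" "lv p0 \<le> lv r" "hh r = H"
    "\<forall>t\<in>strs (lv r). take ?n (pm r t) = ?\<pi> (take ?n t)"
    using ext[OF pi finH injH gd comp, of 0] by blast
  have "\<forall>q\<in>F. cle r q"
  proof
    fix q assume q: "q \<in> F"
    show "cle r q" unfolding cle_def using r sk[OF q] q by (auto simp: H_def)
  qed
  then show ?thesis using r(1) by blast
qed

end

context hsetup
begin

definition Pc :: "cnd set" where "Pc = {p. cond p}"

lemma cond_empty: "cond (0, \<lambda>t. t, {})"
  unfolding cond_def by (simp add: injrel_def bij_betw_def)

lemma Pc_ne: "Pc \<noteq> {}" using cond_empty unfolding Pc_def by blast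

lemma Pc_po: "partial_order_on Pc {(p, q). p \<in> Pc \<and> q \<in> Pc \<and> cle p q}"
  unfolding partial_order_on_def preorder_on_def refl_on_def trans_on_def antisym_on_def
proof (intro conjI ballI impI allI)
  show "{(p, q). p \<in> Pc \<and> q \<in> Pc \<and> cle p q} \<subseteq> Pc \<times> Pc" by blast
  fix x assume "x \<in> Pc" then show "(x, x) \<in> {(p, q). p \<in> Pc \<and> q \<in> Pc \<and> cle p q}"
    using cle_refl unfolding Pc_def by blast
next
  fix x y z assume "(x, y) \<in> {(p, q). p \<in> Pc \<and> q \<in> Pc \<and> cle p q}" "(y, z) \<in> {(p, q). p \<in> Pc \<and> q \<in> Pc \<and> cle p q}"
  then show "(x, z) \<in> {(p, q). p \<in> Pc \<and> q \<in> Pc \<and> cle p q}" using cle_trans[of x y z] by blast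
next
  fix x y assume "(x, y) \<in> {(p, q). p \<in> Pc \<and> q \<in> Pc \<and> cle p q}" "(y, x) \<in> {(p, q). p \<in> Pc \<and> q \<in> Pc \<and> cle p q}"
  then show "x = y" using cle_antisym[of x y] unfolding Pc_def by blast
qed

lemma Pc_sc: "sigma_centered Pc cle"
  unfolding sigma_centered_def
proof (intro exI conjI allI)
  define C where "C k = {p \<in> Pc. to_nat (ckey p) = k}" for k
  show "Pc = (\<Union>k. C k)" unfolding C_def by blast
  fix k show "centered Pc cle (C k)"
    unfolding centered_def
  proof (intro conjI allI impI)
    show "C k \<subseteq> Pc" unfolding C_def by blast
    fix F assume F: "finite F \<and> F \<subseteq> C k"
    show "\<exists>r\<in>Pc. \<forall>q\<in>F. cle r q"
    proof (cases "F = {}")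
      case True then show ?thesis using Pc_ne by blast
    next
      case False
      then obtain p0 where p0: "p0 \<in> F" by blast
      have cF: "\<forall>q\<in>F. cond q" using F unfolding C_def Pc_def by blast
      have kF: "\<forall>q\<in>F. ckey q = ckey p0"
      proof
        fix q assume "q \<in> F"
        then have "to_nat (ckey q) = to_nat (ckey p0)" using F p0 unfolding C_def by blast
        then show "ckey q = ckey p0" by simp
      qed
      obtain r where "cond r" "\<forall>q\<in>F. cle r q" using centered_union[OF _ p0 cF kF] F by blast
      then show ?thesis unfolding Pc_def by blast
    qed
  qed
qed

lemma dense_E: "dense_in_poset Pc cle {p \<in> Pc. k \<le> lv p}"
  unfolding dense_in_poset_def
proof (intro conjI ballI)
  fix p assume "p \<in> Pc"
  then have c: "cond p" by (simp add: Pc_def)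
  obtain r where "cond r" "k \<le> lv r" "cle r p" "hh r = hh p"
    using ext1[OF c cond_fin[OF c] cond_inj[OF c] subset_refl cond_goodall[OF c] cond_compall[OF c], of k] by blast
  then show "\<exists>d\<in>{p \<in> Pc. k \<le> lv p}. cle d p" unfolding Pc_def by blast
qed auto

lemma dense_A:
  assumes "\<alpha> \<in> I" "x \<in> A \<alpha>"
  shows "dense_in_poset Pc cle {p \<in> Pc. x \<in> Domain (hh p)}"
  unfolding dense_in_poset_def
proof (intro conjI ballI)
  fix p assume "p \<in> Pc"
  then have c: "cond p" by (simp add: Pc_def)
  show "\<exists>d\<in>{p \<in> Pc. x \<in> Domain (hh p)}. cle d p"
  proof (cases "x \<in> Domain (hh p)")
    case True then show ?thesis using cle_refl[OF c] \<open>p \<in> Pc\<close> by blast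
  next
    case False
    let ?s = "pm p (pre (lv p) x)"
    have "?s \<in> strs (lv p)" using cond_pm[OF c] by simp
    then have len: "length ?s = lv p" by (simp add: strs_def)
    have "finite (Range (hh p))" using cond_fin[OF c] by (simp add: finite_Range)
    then obtain y where y: "y \<in> B \<alpha>" "pre (lv p) y = ?s" "y \<notin> Range (hh p)"
      using dense_pick[OF _ _ len] B_dense assms(1) by blast
    let ?H = "insert (x,y) (hh p)"
    have fin: "finite ?H" using cond_fin[OF c] by simp
    have inj: "injrel ?H" using injrel_insert[OF cond_inj[OF c] False y(3)] .
    have gd: "\<forall>(a,b)\<in>?H. good a b" using cond_goodall[OF c] assms y(1) unfolding good_def by blast
    have comp: "\<forall>(a,b)\<in>?H. pm p (pre (lv p) a) = pre (lv p) b" using cond_compall[OF c] y(2) by simp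
    obtain r where r: "cond r" "cle r p" "hh r = ?H"
      using ext1[OF c fin inj _ gd comp, of 0] by blast
    then have "r \<in> {p \<in> Pc. x \<in> Domain (hh p)}" unfolding Pc_def by auto
    then show ?thesis using r(2) by blast
  qed
qed auto

lemma dense_B:
  assumes "\<alpha> \<in> I" "y \<in> B \<alpha>"
  shows "dense_in_poset Pc cle {p \<in> Pc. y \<in> Range (hh p)}"
  unfolding dense_in_poset_def
proof (intro conjI ballI)
  fix p assume "p \<in> Pc"
  then have c: "cond p" by (simp add: Pc_def)
  show "\<exists>d\<in>{p \<in> Pc. y \<in> Range (hh p)}. cle d p"
  proof (cases "y \<in> Range (hh p)")
    case True then show ?thesis using cle_refl[OF c] \<open>p \<in> Pc\<close> by blast
  next
    case False
    let ?s = "inv_into (strs (lv p)) (pm p) (pre (lv p) y)"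
    have bj: "bij_betw (pm p) (strs (lv p)) (strs (lv p))" using cond_bij[OF c] .
    have "?s \<in> strs (lv p)" using bj by (meson bij_betwE bij_betw_inv_into pre_strs)
    then have len: "length ?s = lv p" by (simp add: strs_def)
    have ps: "pm p ?s = pre (lv p) y" using bj by (simp add: bij_betw_inv_into_right)
    have "finite (Domain (hh p))" using cond_fin[OF c] by (simp add: finite_Domain)
    then obtain x where x: "x \<in> A \<alpha>" "pre (lv p) x = ?s" "x \<notin> Domain (hh p)"
      using dense_pick[OF _ _ len] A_dense assms(1) by blast
    let ?H = "insert (x,y) (hh p)"
    have fin: "finite ?H" using cond_fin[OF c] by simp
    have inj: "injrel ?H" using injrel_insert[OF cond_inj[OF c] x(3) False] .
    have gd: "\<forall>(a,b)\<in>?H. good a b" using cond_goodall[OF c] assms x(1) unfolding good_def by blast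
    have comp: "\<forall>(a,b)\<in>?H. pm p (pre (lv p) a) = pre (lv p) b" using cond_compall[OF c] x(2) ps by simp
    obtain r where r: "cond r" "cle r p" "hh r = ?H"
      using ext1[OF c fin inj _ gd comp, of 0] by blast
    then have "r \<in> {p \<in> Pc. y \<in> Range (hh p)}" unfolding Pc_def by auto
    then show ?thesis using r(2) by blast
  qed
qed auto

lemma inv_coh:
  assumes cr: "cond r" and cp: "cond p" and rp: "cle r p" and t: "t \<in> strs (lv r)"
  shows "take (lv p) (inv_into (strs (lv r)) (pm r) t) = inv_into (strs (lv p)) (pm p) (take (lv p) t)"
proof -
  let ?u = "inv_into (strs (lv r)) (pm r) t"
  have br: "bij_betw (pm r) (strs (lv r)) (strs (lv r))" using cond_bij[OF cr] .
  have bp: "bij_betw (pm p) (strs (lv p)) (strs (lv p))" using cond_bij[OF cp] .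
  have u: "?u \<in> strs (lv r)" using br t by (meson bij_betwE bij_betw_inv_into)
  have pu: "pm r ?u = t" using br t by (simp add: bij_betw_inv_into_right)
  have le: "lv p \<le> lv r" using rp unfolding cle_def by simp
  have "take (lv p) t = pm p (take (lv p) ?u)" using rp u pu unfolding cle_def by metis
  moreover have "take (lv p) ?u \<in> strs (lv p)" using u le by (simp add: strs_def)
  ultimately show ?thesis using bp by (simp add: bij_betw_inv_into_left)
qed

lemma from_filter:
  assumes filt: "poset_filter Pc cle G"
    and mE: "\<forall>k. G \<inter> {p \<in> Pc. k \<le> lv p} \<noteq> {}"
    and mA: "\<forall>\<alpha>\<in>I. \<forall>x\<in>A \<alpha>. G \<inter> {p \<in> Pc. x \<in> Domain (hh p)} \<noteq> {}"
    and mB: "\<forall>\<alpha>\<in>I. \<forall>y\<in>B \<alpha>. G \<inter> {p \<in> Pc. y \<in> Range (hh p)} \<noteq> {}"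
  shows "\<exists>f. homeomorphic_map cantor_space cantor_space f \<and> (\<forall>\<alpha>\<in>I. f ` (A \<alpha>) = B \<alpha>)"
proof -
  have GP: "\<forall>p\<in>G. cond p" using filt unfolding poset_filter_def Pc_def by blast
  have dir: "\<forall>p\<in>G. \<forall>q\<in>G. \<exists>r\<in>G. cle r p \<and> cle r q" using filt unfolding poset_filter_def by blast
  have unb: "\<forall>j. \<exists>p\<in>G. j < lv p"
  proof
    fix j obtain p where "p \<in> G" "Suc j \<le> lv p" using mE[rule_format, of "Suc j"] by blast
    moreover then have "j < lv p" by simp
    ultimately show "\<exists>p\<in>G. j < lv p" by blast
  qed
  have dir1: "\<forall>p\<in>G. \<forall>q\<in>G. \<exists>r\<in>G. lv p \<le> lv r \<and> lv q \<le> lv r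
       \<and> (\<forall>t\<in>strs (lv r). take (lv p) (pm r t) = pm p (take (lv p) t))
       \<and> (\<forall>t\<in>strs (lv r). take (lv q) (pm r t) = pm q (take (lv q) t))"
    using dir unfolding cle_def by blast
  have maps1: "\<forall>p\<in>G. \<forall>t\<in>strs (lv p). pm p t \<in> strs (lv p)" using GP cond_pm by blast
  obtain F where F: "\<forall>p\<in>G. \<forall>x. pre (lv p) (F x) = pm p (pre (lv p) x)"
     "continuous_map cantor_space cantor_space F"
    using limit_gen[OF unb dir1 maps1] by blast
  define \<psi> where "\<psi> p = inv_into (strs (lv p)) (pm p)" for p
  have dir2: "\<forall>p\<in>G. \<forall>q\<in>G. \<exists>r\<in>G. lv p \<le> lv r \<and> lv q \<le> lv r
       \<and> (\<forall>t\<in>strs (lv r). take (lv p) (\<psi> r t) = \<psi> p (take (lv p) t))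
       \<and> (\<forall>t\<in>strs (lv r). take (lv q) (\<psi> r t) = \<psi> q (take (lv q) t))"
  proof (intro ballI)
    fix p q assume p: "p \<in> G" and q: "q \<in> G"
    obtain r where r: "r \<in> G" "cle r p" "cle r q" using dir p q by blast
    show "\<exists>r\<in>G. lv p \<le> lv r \<and> lv q \<le> lv r
       \<and> (\<forall>t\<in>strs (lv r). take (lv p) (\<psi> r t) = \<psi> p (take (lv p) t))
       \<and> (\<forall>t\<in>strs (lv r). take (lv q) (\<psi> r t) = \<psi> q (take (lv q) t))"
      using r inv_coh[of r p] inv_coh[of r q] GP p q unfolding \<psi>_def cle_def by blast
  qed
  have maps2: "\<forall>p\<in>G. \<forall>t\<in>strs (lv p). \<psi> p t \<in> strs (lv p)"
    using GP cond_bij unfolding \<psi>_def by (meson bij_betwE bij_betw_inv_into)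
  obtain F' where F': "\<forall>p\<in>G. \<forall>x. pre (lv p) (F' x) = \<psi> p (pre (lv p) x)"
     "continuous_map cantor_space cantor_space F'"
    using limit_gen[OF unb dir2 maps2] by blast
  have unb': "\<exists>m. j < m \<and> P m" if "\<And>p. p \<in> G \<Longrightarrow> P (lv p)" for j P
    using unb that by blast
  have FF': "F' (F x) = x" for x
  proof (rule eq_by_pre, intro allI)
    fix j
    show "\<exists>m. j < m \<and> pre m (F' (F x)) = pre m x"
    proof (rule unb')
      fix p assume p: "p \<in> G"
      have "pre (lv p) (F' (F x)) = \<psi> p (pm p (pre (lv p) x))" using F(1) F'(1) p by simp
      also have "\<dots> = pre (lv p) x" unfolding \<psi>_def
        using cond_bij[OF GP[rule_format, OF p]] by (simp add: bij_betw_inv_into_left)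
      finally show "pre (lv p) (F' (F x)) = pre (lv p) x" .
    qed
  qed
  have F'F: "F (F' x) = x" for x
  proof (rule eq_by_pre, intro allI)
    fix j
    show "\<exists>m. j < m \<and> pre m (F (F' x)) = pre m x"
    proof (rule unb')
      fix p assume p: "p \<in> G"
      have "pre (lv p) (F (F' x)) = pm p (\<psi> p (pre (lv p) x))" using F(1) F'(1) p by simp
      also have "\<dots> = pre (lv p) x" unfolding \<psi>_def
        using cond_bij[OF GP[rule_format, OF p]] by (simp add: bij_betw_inv_into_right)
      finally show "pre (lv p) (F (F' x)) = pre (lv p) x" .
    qed
  qed
  have homeo: "homeomorphic_map cantor_space cantor_space F"
    unfolding homeomorphic_map_maps homeomorphic_maps_def using F(2) F'(2) FF' F'F by blast
  have Fxy: "F x = y" if p: "p \<in> G" and xy: "(x,y) \<in> hh p" for p x y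
  proof (rule eq_by_pre, intro allI)
    fix j
    obtain q where q: "q \<in> G" "j < lv q" using unb by blast
    obtain r where r: "r \<in> G" "cle r p" "cle r q" using dir p q(1) by blast
    have "(x,y) \<in> hh r" using r(2) xy unfolding cle_def by blast
    then have "pm r (pre (lv r) x) = pre (lv r) y" using cond_comp GP r(1) by blast
    then have "pre (lv r) (F x) = pre (lv r) y" using F(1) r(1) by simp
    moreover have "j < lv r" using q(2) r(3) unfolding cle_def by simp
    ultimately show "\<exists>m. j < m \<and> pre m (F x) = pre m y" by blast
  qed
  have "\<forall>\<alpha>\<in>I. F ` (A \<alpha>) = B \<alpha>"
  proof (intro ballI equalityI subsetI)
    fix \<alpha> z assume \<alpha>: "\<alpha> \<in> I" and z: "z \<in> F ` A \<alpha>"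
    then obtain x where x: "x \<in> A \<alpha>" "z = F x" by blast
    obtain p where p: "p \<in> G" "x \<in> Domain (hh p)" using mA \<alpha> x(1) by blast
    then obtain y where xy: "(x,y) \<in> hh p" by blast
    have "F x = y" using Fxy[OF p(1) xy] .
    obtain \<beta> where \<beta>: "\<beta> \<in> I" "x \<in> A \<beta>" "y \<in> B \<beta>" using cond_good[OF GP[rule_format, OF p(1)] xy] unfolding good_def by blast
    have "\<beta> = \<alpha>" using disjA[OF \<beta>(1) \<alpha> \<beta>(2) x(1)] .
    then show "z \<in> B \<alpha>" using \<beta>(3) x(2) \<open>F x = y\<close> by simp
  next
    fix \<alpha> y assume \<alpha>: "\<alpha> \<in> I" and y: "y \<in> B \<alpha>"
    obtain p where p: "p \<in> G" "y \<in> Range (hh p)" using mB \<alpha> y by blast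
    then obtain x where xy: "(x,y) \<in> hh p" by blast
    have "F x = y" using Fxy[OF p(1) xy] .
    obtain \<beta> where \<beta>: "\<beta> \<in> I" "x \<in> A \<beta>" "y \<in> B \<beta>" using cond_good[OF GP[rule_format, OF p(1)] xy] unfolding good_def by blast
    have "\<beta> = \<alpha>" using disjB[OF \<beta>(1) \<alpha> \<beta>(3) y] .
    then show "y \<in> F ` A \<alpha>" using \<beta>(2) \<open>F x = y\<close> by blast
  qed
  then show ?thesis using homeo by blast
qed

end

lemma MA_transfer:
  fixes P :: "'a set" and le :: "'a \<Rightarrow> 'a \<Rightarrow> bool" and e :: "'a \<Rightarrow> nat set"
  assumes MA: "MA_sigma_centered" and inj: "inj_on e P" and ne: "P \<noteq> {}"
    and po: "partial_order_on P {(p, q). p \<in> P \<and> q \<in> P \<and> le p q}"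
    and sc: "sigma_centered P le"
    and card: "\<D> \<prec> continuum_set" and dense: "\<forall>D\<in>\<D>. dense_in_poset P le D"
  shows "\<exists>G. poset_filter P le G \<and> (\<forall>D\<in>\<D>. G \<inter> D \<noteq> {})"
proof -
  define d where "d = inv_into P e"
  define P' where "P' = e ` P"
  define le' where "le' a b = le (d a) (d b)" for a b
  have dP: "a \<in> P' \<Longrightarrow> d a \<in> P \<and> e (d a) = a" for a
    unfolding P'_def d_def by (auto simp: inv_into_into f_inv_into_f)
  have de: "p \<in> P \<Longrightarrow> d (e p) = p" for p unfolding d_def using inj by simp
  have refl: "\<forall>p\<in>P. le p p" using po unfolding partial_order_on_def preorder_on_def refl_on_def by blast
  have trans: "\<forall>p\<in>P. \<forall>q\<in>P. \<forall>r\<in>P. le p q \<longrightarrow> le q r \<longrightarrow> le p r"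
    using po unfolding partial_order_on_def preorder_on_def trans_on_def by blast
  have anti: "\<forall>p\<in>P. \<forall>q\<in>P. le p q \<longrightarrow> le q p \<longrightarrow> p = q"
    using po unfolding partial_order_on_def antisym_on_def by blast
  have po': "partial_order_on P' {(p, q). p \<in> P' \<and> q \<in> P' \<and> le' p q}"
    unfolding partial_order_on_def preorder_on_def refl_on_def trans_on_def antisym_on_def
  proof (intro conjI ballI impI allI)
    show "{(p, q). p \<in> P' \<and> q \<in> P' \<and> le' p q} \<subseteq> P' \<times> P'" by blast
    fix x assume "x \<in> P'" then show "(x, x) \<in> {(p, q). p \<in> P' \<and> q \<in> P' \<and> le' p q}"
      using refl dP unfolding le'_def by blast
  next
    fix x y z assume "(x, y) \<in> {(p, q). p \<in> P' \<and> q \<in> P' \<and> le' p q}" "(y, z) \<in> {(p, q). p \<in> P' \<and> q \<in> P' \<and> le' p q}"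
    then show "(x, z) \<in> {(p, q). p \<in> P' \<and> q \<in> P' \<and> le' p q}" using trans dP unfolding le'_def by blast
  next
    fix x y assume "(x, y) \<in> {(p, q). p \<in> P' \<and> q \<in> P' \<and> le' p q}" "(y, x) \<in> {(p, q). p \<in> P' \<and> q \<in> P' \<and> le' p q}"
    then have "x \<in> P'" "y \<in> P'" "d x = d y" using anti dP unfolding le'_def by auto
    then show "x = y" using dP by metis
  qed
  obtain C :: "nat \<Rightarrow> 'a set" where C: "P = (\<Union>n. C n)" "\<forall>n. centered P le (C n)" using sc unfolding sigma_centered_def by blast
  have sc': "sigma_centered P' le'"
    unfolding sigma_centered_def
  proof (intro exI conjI allI)
    show "P' = (\<Union>n. e ` C n)" unfolding P'_def using C(1) by blast
    fix n show "centered P' le' (e ` C n)"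
      unfolding centered_def
    proof (intro conjI allI impI)
      have cn: "centered P le (C n)" using C(2) by blast
      have CP: "C n \<subseteq> P" using cn unfolding centered_def by blast
      have cn2: "\<forall>F. finite F \<and> F \<subseteq> C n \<longrightarrow> (\<exists>r\<in>P. \<forall>q\<in>F. le r q)" using cn unfolding centered_def by simp
      show "e ` C n \<subseteq> P'" using CP unfolding P'_def by blast
      fix F assume F: "finite F \<and> F \<subseteq> e ` C n"
      have "d ` F \<subseteq> C n"
      proof
        fix z assume "z \<in> d ` F"
        then obtain c where "c \<in> C n" "z = d (e c)" using F by blast
        then show "z \<in> C n" using CP de by auto
      qed
      then have "finite (d ` F) \<and> d ` F \<subseteq> C n" using F by simp
      then obtain r where r: "r \<in> P" "\<forall>q\<in>d ` F. le r q" using cn2[rule_format, of "d ` F"] by blast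
      have "e r \<in> P'" using r(1) unfolding P'_def by blast
      moreover have "\<forall>q\<in>F. le' (e r) q"
      proof
        fix q assume "q \<in> F"
        then have "le r (d q)" using r(2) by blast
        then show "le' (e r) q" unfolding le'_def using de[OF r(1)] by simp
      qed
      ultimately show "\<exists>r\<in>P'. \<forall>q\<in>F. le' r q" by blast
    qed
  qed
  define \<D>' where "\<D>' = (\<lambda>D. e ` D) ` \<D>"
  have card': "\<D>' \<prec> continuum_set" unfolding \<D>'_def using lesspoll_trans1[OF image_lepoll card] .
  have dense': "\<forall>D\<in>\<D>'. dense_in_poset P' le' D"
  proof
    fix D' assume "D' \<in> \<D>'"
    then obtain D where D: "D \<in> \<D>" "D' = e ` D" unfolding \<D>'_def by blast
    have dD: "dense_in_poset P le D" using dense D(1) by blast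
    have dd: "D \<subseteq> P" "\<forall>p\<in>P. \<exists>q\<in>D. le q p" using dD unfolding dense_in_poset_def by simp_all
    show "dense_in_poset P' le' D'"
      unfolding dense_in_poset_def
    proof (intro conjI ballI)
      show "D' \<subseteq> P'" using dd(1) D(2) unfolding P'_def by blast
      fix a assume a: "a \<in> P'"
      have da: "d a \<in> P" using dP[OF a] by simp
      obtain q where q: "q \<in> D" "le q (d a)" using bspec[OF dd(2) da] by blast
      have qP: "q \<in> P" using q(1) dd(1) by blast
      have "le' (e q) a" unfolding le'_def using de[OF qP] q(2) by simp
      then show "\<exists>b\<in>D'. le' b a" using q(1) D(2) by blast
    qed
  qed
  have ne': "P' \<noteq> {}" using ne unfolding P'_def by blast
  obtain G' where G': "poset_filter P' le' G'" "\<forall>D\<in>\<D>'. G' \<inter> D \<noteq> {}"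
  proof -
    have MA': "P' \<noteq> {} \<and> partial_order_on P' {(p, q). p \<in> P' \<and> q \<in> P' \<and> le' p q} \<and> sigma_centered P' le' \<longrightarrow>
      (\<forall>\<D>. \<D> \<prec> continuum_set \<and> (\<forall>D\<in>\<D>. dense_in_poset P' le' D) \<longrightarrow>
         (\<exists>G. poset_filter P' le' G \<and> (\<forall>D\<in>\<D>. G \<inter> D \<noteq> {})))"
    proof -
      have MA0: "\<forall>(P :: nat set set) le. P \<noteq> {} \<and> partial_order_on P {(p, q). p \<in> P \<and> q \<in> P \<and> le p q}
        \<and> sigma_centered P le \<longrightarrow>
      (\<forall>\<D>. \<D> \<prec> continuum_set \<and> (\<forall>D\<in>\<D>. dense_in_poset P le D) \<longrightarrow>
         (\<exists>G. poset_filter P le G \<and> (\<forall>D\<in>\<D>. G \<inter> D \<noteq> {})))" using MA unfolding MA_sigma_centered_def .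
      note MA1 = spec[OF MA0, of P']
      show ?thesis using spec[OF MA1, of le'] .
    qed
    have "\<exists>G. poset_filter P' le' G \<and> (\<forall>D\<in>\<D>'. G \<inter> D \<noteq> {})"
      using mp[OF MA' conjI[OF ne' conjI[OF po' sc']], THEN spec[of _ \<D>'], THEN mp, OF conjI[OF card' dense']] .
    then show ?thesis using that by blast
  qed
  define G where "G = d ` G'"
  have f: "G' \<subseteq> P'" "G' \<noteq> {}" "\<forall>p\<in>G'. \<forall>q\<in>P'. le' p q \<longrightarrow> q \<in> G'" "\<forall>p\<in>G'. \<forall>q\<in>G'. \<exists>r\<in>G'. le' r p \<and> le' r q"
    using G'(1) unfolding poset_filter_def by blast+
  have "poset_filter P le G"
    unfolding poset_filter_def
  proof (intro conjI ballI impI)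
    show "G \<subseteq> P" unfolding G_def using f(1) dP by blast
    show "G \<noteq> {}" unfolding G_def using f(2) by blast
  next
    fix p q assume p: "p \<in> G" and q: "q \<in> P" and pq: "le p q"
    then obtain a where a: "a \<in> G'" "p = d a" unfolding G_def by blast
    have "e q \<in> P'" using q unfolding P'_def by blast
    moreover have "le' a (e q)" unfolding le'_def using a pq de q by simp
    ultimately have "e q \<in> G'" using f(3) a(1) by blast
    then show "q \<in> G" unfolding G_def using de q by force
  next
    fix p q assume p: "p \<in> G" and q: "q \<in> G"
    then obtain a b where ab: "a \<in> G'" "p = d a" "b \<in> G'" "q = d b" unfolding G_def by blast
    then obtain c where "c \<in> G'" "le' c a" "le' c b" using f(4) by blast
    then show "\<exists>r\<in>G. le r p \<and> le r q" unfolding G_def le'_def using ab by blast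
  qed
  moreover have "\<forall>D\<in>\<D>. G \<inter> D \<noteq> {}"
  proof
    fix D assume D: "D \<in> \<D>"
    then have "G' \<inter> e ` D \<noteq> {}" using G'(2) unfolding \<D>'_def by blast
    then obtain p where p: "p \<in> D" "e p \<in> G'" by blast
    have "D \<subseteq> P" using dense D unfolding dense_in_poset_def by blast
    then have "p \<in> G" unfolding G_def using p de by force
    then show "G \<inter> D \<noteq> {}" using p by blast
  qed
  ultimately show ?thesis by blast
qed

definition cl :: "(nat \<Rightarrow> bool) list \<Rightarrow> nat set" where
  "cl zs = {prod_encode (i, 0) | i. i < length zs} \<union> {prod_encode (i, Suc j) | i j. i < length zs \<and> (zs ! i) j}"

lemma cl_len: "prod_encode (i, 0) \<in> cl zs \<longleftrightarrow> i < length zs"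
  unfolding cl_def by (auto dest: inj_onD[OF inj_prod_encode[of UNIV]])

lemma cl_nth: "i < length zs \<Longrightarrow> prod_encode (i, Suc j) \<in> cl zs \<longleftrightarrow> (zs ! i) j"
  unfolding cl_def by (auto dest: inj_onD[OF inj_prod_encode[of UNIV]])

lemma cl_inj: assumes "cl zs = cl ws" shows "zs = ws"
proof -
  have l: "\<forall>i. i < length zs \<longleftrightarrow> i < length ws" using assms cl_len by metis
  then have len: "length zs = length ws" by (meson less_irrefl_nat nat_neq_iff)
  show ?thesis
  proof (rule nth_equalityI)
    show "length zs = length ws" by (rule len)
    fix i assume i: "i < length zs"
    show "zs ! i = ws ! i"
    proof
      fix j show "(zs ! i) j = (ws ! i) j" using cl_nth[OF i, of j] cl_nth[of i ws j] i len assms by simp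
    qed
  qed
qed

definition pf :: "(nat \<Rightarrow> bool) \<times> (nat \<Rightarrow> bool) \<Rightarrow> nat \<Rightarrow> bool" where
  "pf z = (\<lambda>k. if even k then fst z (k div 2) else snd z (k div 2))"

lemma pf_inj: "inj pf"
proof (rule injI)
  fix a b assume h: "pf a = pf b"
  have "fst a k = fst b k" for k using fun_cong[OF h, of "2*k"] by (simp add: pf_def)
  moreover have "snd a k = snd b k" for k using fun_cong[OF h, of "2*k+1"] by (simp add: pf_def)
  ultimately show "a = b" by (simp add: prod_eq_iff fun_eq_iff)
qed

definition lst :: "'a set \<Rightarrow> 'a list" where "lst H = (SOME xs. set xs = H)"

lemma set_lst: "finite H \<Longrightarrow> set (lst H) = H"
  unfolding lst_def by (rule someI_ex) (rule finite_list)

definition enc :: "cnd \<Rightarrow> nat set" where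
  "enc p = cl ((\<lambda>j. j = to_nat (lv p, map (pm p) (List.n_lists (lv p) [True, False]))) # map pf (lst (hh p)))"

lemma enc_inj: "inj_on enc {p. (\<forall>t. t \<notin> strs (lv p) \<longrightarrow> pm p t = t) \<and> finite (hh p)}"
proof (rule inj_onI)
  fix p q
  assume p: "p \<in> {p. (\<forall>t. t \<notin> strs (lv p) \<longrightarrow> pm p t = t) \<and> finite (hh p)}"
    and q: "q \<in> {p. (\<forall>t. t \<notin> strs (lv p) \<longrightarrow> pm p t = t) \<and> finite (hh p)}"
    and e: "enc p = enc q"
  have eq: "(\<lambda>j. j = to_nat (lv p, map (pm p) (List.n_lists (lv p) [True, False]))) # map pf (lst (hh p))
     = (\<lambda>j. j = to_nat (lv q, map (pm q) (List.n_lists (lv q) [True, False]))) # map pf (lst (hh q))"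
    using cl_inj e unfolding enc_def by blast
  then have "(\<lambda>j. j = to_nat (lv p, map (pm p) (List.n_lists (lv p) [True, False])))
     = (\<lambda>j. j = to_nat (lv q, map (pm q) (List.n_lists (lv q) [True, False])))" by simp
  then have "to_nat (lv p, map (pm p) (List.n_lists (lv p) [True, False])) = to_nat (lv q, map (pm q) (List.n_lists (lv q) [True, False]))"
    by (metis (mono_tags, lifting))
  then have l: "lv p = lv q" and m: "map (pm p) (List.n_lists (lv p) [True, False]) = map (pm q) (List.n_lists (lv p) [True, False])"
    by auto
  have "pm p = pm q"
  proof
    fix t show "pm p t = pm q t"
    proof (cases "t \<in> strs (lv p)")
      case True then show ?thesis using m unfolding map_eq_conv set_enum by simp
    next
      case False then show ?thesis using p q l by simp
    qed
  qed
  moreover have "map pf (lst (hh p)) = map pf (lst (hh q))" using eq by simp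
  then have "lst (hh p) = lst (hh q)" using pf_inj by (simp add: inj_map_eq_map)
  then have "hh p = hh q" using set_lst p q by (metis (no_types, lifting) mem_Collect_eq)
  ultimately show "p = q" using l cnd_eq by blast
qed

lemma countable_lesspoll_c: assumes "countable X" shows "X \<prec> continuum_set"
proof -
  obtain f :: "_ \<Rightarrow> nat" where "inj_on f X" using assms unfolding countable_def by blast
  then have 1: "X \<lesssim> (UNIV :: nat set)" unfolding lepoll_def by blast
  have 2: "(UNIV :: nat set) \<prec> Pow (UNIV :: nat set)" by (rule lesspoll_Pow_self)
  have "bij_betw (\<lambda>S n. n \<in> S) (Pow (UNIV :: nat set)) (UNIV :: (nat \<Rightarrow> bool) set)"
    by (rule bij_betw_byWitness[where f' = "\<lambda>x. {n. x n}"]) auto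
  then have 3: "Pow (UNIV :: nat set) \<approx> continuum_set" unfolding eqpoll_def by blast
  show ?thesis using lesspoll_trans1[OF 1 lesspoll_eq_trans[OF 2 3]] .
qed

lemma times_nat_lesspoll: assumes "X \<prec> continuum_set" shows "X \<times> (UNIV :: nat set) \<prec> continuum_set"
proof (cases "finite X")
  case True
  then have "countable (X \<times> (UNIV :: nat set))" by (simp add: countable_finite)
  then show ?thesis by (rule countable_lesspoll_c)
next
  case False
  have "(UNIV :: nat set) \<lesssim> X" using False infinite_le_lepoll by blast
  then have "X \<times> (UNIV :: nat set) \<lesssim> X \<times> X" by (simp add: times_lepoll_mono)
  moreover have "X \<times> X \<approx> X" using card_of_Times_same_infinite[OF False] eqpoll_iff_card_of_ordIso by blast
  ultimately have "X \<times> (UNIV :: nat set) \<lesssim> X" using lepoll_trans2 by blast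
  then show ?thesis using assms lesspoll_trans1 by blast
qed


theorem theorem2p1:
  fixes I :: "'i set"
    and A B :: "'i \<Rightarrow> (nat \<Rightarrow> bool) set"
  assumes MA: "MA_sigma_centered"
    and kappa: "I \<prec> continuum_set"
    and A_count: "\<forall>\<alpha>\<in>I. countable (A \<alpha>)"
    and A_dense: "\<forall>\<alpha>\<in>I. cantor_space closure_of (A \<alpha>) = topspace cantor_space"
    and B_count: "\<forall>\<alpha>\<in>I. countable (B \<alpha>)"
    and B_dense: "\<forall>\<alpha>\<in>I. cantor_space closure_of (B \<alpha>) = topspace cantor_space"
    and A_disj: "\<forall>\<alpha>\<in>I. \<forall>\<beta>\<in>I. \<alpha> \<noteq> \<beta> \<longrightarrow> A \<alpha> \<inter> A \<beta> = {}"
    and B_disj: "\<forall>\<alpha>\<in>I. \<forall>\<beta>\<in>I. \<alpha> \<noteq> \<beta> \<longrightarrow> B \<alpha> \<inter> B \<beta> = {}"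
  shows "\<exists>f. homeomorphic_map cantor_space cantor_space f \<and> (\<forall>\<alpha>\<in>I. f ` (A \<alpha>) = B \<alpha>)"
proof (cases "I = {}")
  case True
  have "homeomorphic_map cantor_space cantor_space id" by simp
  then show ?thesis using True by blast
next
  case False
  then obtain \<alpha>0 where \<alpha>0: "\<alpha>0 \<in> I" by blast
  interpret hsetup I A B
    using A_count A_dense B_count B_dense A_disj B_disj by (rule hsetup.intro)
  define E where "E k = {p \<in> Pc. k \<le> lv p}" for k
  define DA where "DA x = {p \<in> Pc. x \<in> Domain (hh p)}" for x
  define DB where "DB y = {p \<in> Pc. y \<in> Range (hh p)}" for y
  define \<D> where "\<D> = range E \<union> DA ` (\<Union>\<alpha>\<in>I. A \<alpha>) \<union> DB ` (\<Union>\<alpha>\<in>I. B \<alpha>)"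
  define h where "h z = (case z of ((\<alpha>, n), k) \<Rightarrow>
     (if k = (0::nat) then DA (from_nat_into (A \<alpha>) n) else if k = 1 then DB (from_nat_into (B \<alpha>) n) else E n))" for z
  have D_cases: "thesis" if "D \<in> \<D>" "\<And>k. D = E k \<Longrightarrow> thesis"
    "\<And>\<alpha> x. \<alpha> \<in> I \<Longrightarrow> x \<in> A \<alpha> \<Longrightarrow> D = DA x \<Longrightarrow> thesis"
    "\<And>\<alpha> y. \<alpha> \<in> I \<Longrightarrow> y \<in> B \<alpha> \<Longrightarrow> D = DB y \<Longrightarrow> thesis" for D thesis
  proof -
    have "D \<in> range E \<or> D \<in> DA ` (\<Union>\<alpha>\<in>I. A \<alpha>) \<or> D \<in> DB ` (\<Union>\<alpha>\<in>I. B \<alpha>)"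
      using that(1) unfolding \<D>_def by simp
    then show thesis
    proof (elim disjE)
      assume "D \<in> range E" then obtain k where "D = E k" by (rule rangeE)
      then show thesis by (rule that(2))
    next
      assume "D \<in> DA ` (\<Union>\<alpha>\<in>I. A \<alpha>)"
      then obtain x where x: "x \<in> (\<Union>\<alpha>\<in>I. A \<alpha>)" "D = DA x" by (rule imageE) simp
      from x(1) obtain \<alpha> where "\<alpha> \<in> I" "x \<in> A \<alpha>" by (rule UN_E)
      then show thesis using that(3) x(2) by simp
    next
      assume "D \<in> DB ` (\<Union>\<alpha>\<in>I. B \<alpha>)"
      then obtain x where x: "x \<in> (\<Union>\<alpha>\<in>I. B \<alpha>)" "D = DB x" by (rule imageE) simp
      from x(1) obtain \<alpha> where "\<alpha> \<in> I" "x \<in> B \<alpha>" by (rule UN_E)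
      then show thesis using that(4) x(2) by simp
    qed
  qed
  have sub: "\<D> \<subseteq> h ` ((I \<times> (UNIV :: nat set)) \<times> (UNIV :: nat set))"
  proof
    fix D assume "D \<in> \<D>"
    then consider (e) k where "D = E k" | (a) \<alpha> x where "\<alpha> \<in> I" "x \<in> A \<alpha>" "D = DA x"
      | (b) \<alpha> y where "\<alpha> \<in> I" "y \<in> B \<alpha>" "D = DB y"
      by (rule D_cases)
    then show "D \<in> h ` ((I \<times> UNIV) \<times> UNIV)"
    proof cases
      case e
      have "D = h ((\<alpha>0, k), 2)" using e by (simp add: h_def)
      moreover have "((\<alpha>0, k), 2::nat) \<in> (I \<times> UNIV) \<times> UNIV" using \<alpha>0 by simp
      ultimately show ?thesis by (rule image_eqI)
    next
      case a
      have cA: "countable (A \<alpha>)" using A_count a(1) by simp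
      obtain n where "from_nat_into (A \<alpha>) n = x" using from_nat_into_surj[OF cA a(2)] by (elim exE)
      then have "D = h ((\<alpha>, n), 0)" using a by (simp add: h_def)
      moreover have "((\<alpha>, n), 0::nat) \<in> (I \<times> UNIV) \<times> UNIV" using a(1) by simp
      ultimately show ?thesis by (rule image_eqI)
    next
      case b
      have cB: "countable (B \<alpha>)" using B_count b(1) by simp
      obtain n where "from_nat_into (B \<alpha>) n = y" using from_nat_into_surj[OF cB b(2)] by (elim exE)
      then have "D = h ((\<alpha>, n), 1)" using b by (simp add: h_def)
      moreover have "((\<alpha>, n), 1::nat) \<in> (I \<times> UNIV) \<times> UNIV" using b(1) by simp
      ultimately show ?thesis by (rule image_eqI)
    qed
  qed
  have card: "\<D> \<prec> continuum_set"
  proof -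
    have "\<D> \<lesssim> (I \<times> (UNIV :: nat set)) \<times> (UNIV :: nat set)" using sub by (rule subset_image_lepoll)
    moreover have "(I \<times> (UNIV :: nat set)) \<times> (UNIV :: nat set) \<prec> continuum_set"
      using times_nat_lesspoll[OF times_nat_lesspoll[OF kappa]] .
    ultimately show ?thesis by (rule lesspoll_trans1)
  qed
  have dense: "\<forall>D\<in>\<D>. dense_in_poset Pc cle D"
  proof
    fix D assume "D \<in> \<D>"
    then consider (e) k where "D = E k" | (a) \<alpha> x where "\<alpha> \<in> I" "x \<in> A \<alpha>" "D = DA x"
      | (b) \<alpha> y where "\<alpha> \<in> I" "y \<in> B \<alpha>" "D = DB y"
      by (rule D_cases)
    then show "dense_in_poset Pc cle D"
    proof cases
      case e then show ?thesis using dense_E unfolding E_def by simp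
    next
      case a then show ?thesis using dense_A[OF a(1,2)] unfolding DA_def by simp
    next
      case b then show ?thesis using dense_B[OF b(1,2)] unfolding DB_def by simp
    qed
  qed
  have inj: "inj_on enc Pc"
  proof (rule inj_on_subset[OF enc_inj], rule subsetI)
    fix p assume "p \<in> Pc"
    then have c: "cond p" by (simp add: Pc_def)
    show "p \<in> {p. (\<forall>t. t \<notin> strs (lv p) \<longrightarrow> pm p t = t) \<and> finite (hh p)}"
      using cond_id[OF c] cond_fin[OF c] by simp
  qed
  obtain G where G: "poset_filter Pc cle G" "\<forall>D\<in>\<D>. G \<inter> D \<noteq> {}"
    using MA_transfer[OF MA inj Pc_ne Pc_po Pc_sc card dense] by blast
  have mE: "\<forall>k. G \<inter> {p \<in> Pc. k \<le> lv p} \<noteq> {}"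
  proof
    fix k have "E k \<in> \<D>" unfolding \<D>_def by blast
    then show "G \<inter> {p \<in> Pc. k \<le> lv p} \<noteq> {}" using G(2) unfolding E_def by blast
  qed
  have mA: "\<forall>\<alpha>\<in>I. \<forall>x\<in>A \<alpha>. G \<inter> {p \<in> Pc. x \<in> Domain (hh p)} \<noteq> {}"
  proof (intro ballI)
    fix \<alpha> x assume "\<alpha> \<in> I" "x \<in> A \<alpha>"
    then have "DA x \<in> \<D>" unfolding \<D>_def by blast
    then show "G \<inter> {p \<in> Pc. x \<in> Domain (hh p)} \<noteq> {}" using G(2) unfolding DA_def by blast
  qed
  have mB: "\<forall>\<alpha>\<in>I. \<forall>y\<in>B \<alpha>. G \<inter> {p \<in> Pc. y \<in> Range (hh p)} \<noteq> {}"
  proof (intro ballI)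
    fix \<alpha> y assume "\<alpha> \<in> I" "y \<in> B \<alpha>"
    then have "DB y \<in> \<D>" unfolding \<D>_def by blast
    then show "G \<inter> {p \<in> Pc. y \<in> Range (hh p)} \<noteq> {}" using G(2) unfolding DB_def by blast
  qed
  show ?thesis using from_filter[OF G(1) mE mA mB] .
qed


end
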